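(* There exist an abelian uniformizable $T$-module $\mathcal{A}$ and a non-trivial algebraic subvariety of $\mathcal{A}$ which contains infinitely many torsion points of $\mathcal{A}$ but contains no torsion set of $\mathcal{A}$.
   Context: Let $A=\mathbb{F}_q[T]$, $k=\mathbb{F}_q(T)$, $k_\infty$ the completion of $k$ at the infinite place, $\mathcal{C}$ the completion of an algebraic closure of $k_\infty$, and $\tau$ the Frobenius $z\mapsto z^q$. A $T$-module of dimension $m$ defined over $\mathcal{F}\subset\overline{k}$ is $\mathcal{A}=(\mathbb{G}_a^m,\Phi)$ where $\Phi:A\to\mathcal{F}^{m,m}\{\tau\}$ is an $\mathbb{F}_q$-algebra homomorphism with $\Phi(T)=\sum_{i=0}^{\tilde d}a_i\tau^i$, $a_i\in\mathcal{F}^{m,m}$, $a_{\tilde d}\neq0$, and $a_0=TI_m+N$ with $N$ nilpotent; it acts on $\mathbb{G}_a^m$ by $\tau$ acting as the $q$-power map coordinatewise. Torsion points: $\mathcal{A}_{tors}=\{x:\exists a\in A\setminus\{0\},\ \Phi(a)(x)=0\}$. A sub-$T$-module is a reduced connected algebraic subgroup $\mathcal{B}\subseteq\mathbb{G}_a^m$ with $\Phi(T)(\mathcal{B})\subseteq\mathcal{B}$. A torsion set is a subset of the form $x+\mathcal{B}$ with $x\in\mathcal{A}_{tors}$ and $\mathcal{B}$ a sub-$T$-module of $\mathcal{A}$ different from $0$ and from $\mathcal{A}$. $\mathcal{A}$ is abelian if $\mathrm{Hom}_{\mathcal{F}}(\mathcal{A},\mathbb{G}_a)$ (the $\mathbb{F}_q$-linear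 algebraic group homomorphisms, i.e. $\mathcal{F}\{\tau\}^m$), made into an $\mathcal{F}[T]$-module by $T\cdot f=f\circ\Phi(T)$ and $\mathcal{F}$ acting by left multiplication, has finite rank. For abelian $\mathcal{A}$ the exponential is the unique $\mathbb{F}_q$-linear entire map $e:\mathrm{Lie}(\mathcal{A})\cong\mathcal{C}^m\to\mathcal{A}(\mathcal{C})$ with differential the identity at $0$ and $e(d\Phi(T)z)=\Phi(T)(e(z))$; $\mathcal{A}$ is uniformizable if $e$ is surjective. *)

theory Defs
  imports "HOL-Computational_Algebra.Polynomial"
begin

(* The ambient field C.  It is a type 'c (a field) together with a     *)
(* non-archimedean absolute value absC, an element T, and q = p^n with *)
(* CHAR('c) = p.  The assumptions in C_model characterise C as the     *)
(* completion of an algebraic closure of k_infty = F_q((1/T)).          *)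

definition Fq :: "nat \<Rightarrow> 'c::field set" where
  "Fq q = {x. x ^ q = x}"

definition abs_value :: "('c::field \<Rightarrow> real) \<Rightarrow> bool" where
  "abs_value absC \<longleftrightarrow>
     (\<forall>x. absC x \<ge> 0) \<and> (\<forall>x. absC x = 0 \<longleftrightarrow> x = 0) \<and>
     (\<forall>x y. absC (x * y) = absC x * absC y) \<and>
     (\<forall>x y. absC (x + y) \<le> max (absC x) (absC y))"

definition conv :: "('c::field \<Rightarrow> real) \<Rightarrow> (nat \<Rightarrow> 'c) \<Rightarrow> 'c \<Rightarrow> bool" where
  "conv absC s L \<longleftrightarrow> (\<forall>e>0. \<exists>N. \<forall>n\<ge>N. absC (s n - L) < e)"

definition complete_wrt :: "('c::field \<Rightarrow> real) \<Rightarrow> bool" where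
  "complete_wrt absC \<longleftrightarrow>
     (\<forall>s. (\<forall>e>0. \<exists>N. \<forall>i\<ge>N. \<forall>j\<ge>N. absC (s i - s j) < e) \<longrightarrow> (\<exists>L. conv absC s L))"

definition alg_closed_field :: "'c::field itself \<Rightarrow> bool" where
  "alg_closed_field _ \<longleftrightarrow> (\<forall>P :: 'c poly. degree P \<ge> 1 \<longrightarrow> (\<exists>x. poly P x = 0))"

definition algebraic_over :: "'c::field set \<Rightarrow> 'c \<Rightarrow> bool" where
  "algebraic_over K x \<longleftrightarrow> (\<exists>P. P \<noteq> 0 \<and> (\<forall>j. coeff P j \<in> K) \<and> poly P x = 0)"

definition kfield :: "nat \<Rightarrow> 'c::field \<Rightarrow> 'c set" where
  "kfield q T = {poly a T / poly b T | a b.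
      (\<forall>j. coeff a j \<in> Fq q) \<and> (\<forall>j. coeff b j \<in> Fq q) \<and> poly b T \<noteq> 0}"

definition kinf :: "('c::field \<Rightarrow> real) \<Rightarrow> nat \<Rightarrow> 'c \<Rightarrow> 'c set" where
  "kinf absC q T = {x. \<forall>e>0. \<exists>y\<in>kfield q T. absC (x - y) < e}"

definition kbar :: "nat \<Rightarrow> 'c::field \<Rightarrow> 'c set" where
  "kbar q T = {x. algebraic_over (kfield q T) x}"

definition C_model :: "('c::field \<Rightarrow> real) \<Rightarrow> nat \<Rightarrow> 'c \<Rightarrow> bool" where
  "C_model absC q T \<longleftrightarrow>
     abs_value absC \<and> absC T > 1 \<and> complete_wrt absC \<and> alg_closed_field TYPE('c) \<and>
     (\<forall>x e. e > 0 \<longrightarrow> (\<exists>y. algebraic_over (kinf absC q T) y \<and> absC (x - y) < e))"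

(* Vectors and matrices.  Points of G_a^m(C) are functions nat => 'c   *)
(* vanishing at indices >= m; matrices are nat => nat => 'c, only the  *)
(* entries with indices < m matter.                                    *)

definition cvec :: "nat \<Rightarrow> (nat \<Rightarrow> 'c::zero) set" where
  "cvec m = {x. \<forall>i\<ge>m. x i = 0}"

definition mat_vec :: "nat \<Rightarrow> (nat \<Rightarrow> nat \<Rightarrow> 'c::field) \<Rightarrow> (nat \<Rightarrow> 'c) \<Rightarrow> (nat \<Rightarrow> 'c)" where
  "mat_vec m M x = (\<lambda>i. if i < m then (\<Sum>j<m. M i j * x j) else 0)"

definition mat_mult :: "nat \<Rightarrow> (nat \<Rightarrow> nat \<Rightarrow> 'c::field) \<Rightarrow> (nat \<Rightarrow> nat \<Rightarrow> 'c) \<Rightarrow> (nat \<Rightarrow> nat \<Rightarrow> 'c)" where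
  "mat_mult m A B = (\<lambda>i j. if i < m \<and> j < m then (\<Sum>k<m. A i k * B k j) else 0)"

definition mat_id :: "nat \<Rightarrow> (nat \<Rightarrow> nat \<Rightarrow> 'c::field)" where
  "mat_id m = (\<lambda>i j. if i < m \<and> i = j then 1 else 0)"

fun mat_pow :: "nat \<Rightarrow> (nat \<Rightarrow> nat \<Rightarrow> 'c::field) \<Rightarrow> nat \<Rightarrow> (nat \<Rightarrow> nat \<Rightarrow> 'c)" where
  "mat_pow m A 0 = mat_id m"
| "mat_pow m A (Suc r) = mat_mult m A (mat_pow m A r)"

definition nilpotent_mat :: "nat \<Rightarrow> (nat \<Rightarrow> nat \<Rightarrow> 'c::field) \<Rightarrow> bool" where
  "nilpotent_mat m N \<longleftrightarrow> (\<exists>r. \<forall>i<m. \<forall>j<m. mat_pow m N r i j = 0)"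

(* T-modules.  Phi(T) = sum_{l < length as} (as!l) tau^l.              *)

definition twist_apply :: "nat \<Rightarrow> nat \<Rightarrow> (nat \<Rightarrow> nat \<Rightarrow> 'c::field) list \<Rightarrow> (nat \<Rightarrow> 'c) \<Rightarrow> (nat \<Rightarrow> 'c)" where
  "twist_apply m q as x =
     (\<lambda>i. if i < m then (\<Sum>l<length as. \<Sum>j<m. (as ! l) i j * x j ^ (q ^ l)) else 0)"

definition Phi_poly :: "nat \<Rightarrow> nat \<Rightarrow> (nat \<Rightarrow> nat \<Rightarrow> 'c::field) list \<Rightarrow> 'c poly \<Rightarrow> (nat \<Rightarrow> 'c) \<Rightarrow> (nat \<Rightarrow> 'c)" where
  "Phi_poly m q as a x = (\<lambda>i. \<Sum>j\<le>degree a. coeff a j * ((twist_apply m q as ^^ j) x) i)"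

definition is_subfield :: "'c::field set \<Rightarrow> bool" where
  "is_subfield K \<longleftrightarrow> 0 \<in> K \<and> 1 \<in> K \<and> (\<forall>x\<in>K. \<forall>y\<in>K. x + y \<in> K \<and> x - y \<in> K \<and> x * y \<in> K) \<and>
     (\<forall>x\<in>K. inverse x \<in> K)"

definition Tmodule_over :: "nat \<Rightarrow> 'c::field \<Rightarrow> 'c set \<Rightarrow> nat \<Rightarrow> (nat \<Rightarrow> nat \<Rightarrow> 'c) list \<Rightarrow> bool" where
  "Tmodule_over q T K m as \<longleftrightarrow>
     m \<ge> 1 \<and> as \<noteq> [] \<and>
     (\<forall>l<length as. \<forall>i<m. \<forall>j<m. (as ! l) i j \<in> K) \<and>
     (\<exists>i<m. \<exists>j<m. last as i j \<noteq> 0) \<and>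
     nilpotent_mat m (\<lambda>i j. (as ! 0) i j - (if i = j then T else 0))"

definition torsion :: "nat \<Rightarrow> nat \<Rightarrow> (nat \<Rightarrow> nat \<Rightarrow> 'c::field) list \<Rightarrow> (nat \<Rightarrow> 'c) set" where
  "torsion q m as = {x \<in> cvec m. \<exists>a. a \<noteq> 0 \<and> (\<forall>j. coeff a j \<in> Fq q) \<and> Phi_poly m q as a x = (\<lambda>_. 0)}"

text \<open>Hom_K(A, G_a) = K{tau}^m, as functions C^m -> C\<close>
definition hom_Ga :: "nat \<Rightarrow> 'c::field set \<Rightarrow> nat \<Rightarrow> ((nat \<Rightarrow> 'c) \<Rightarrow> 'c) \<Rightarrow> bool" where
  "hom_Ga q K m h \<longleftrightarrow> (\<exists>n b. (\<forall>k i. b k i \<in> K) \<and>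
      h = (\<lambda>x. \<Sum>k<m. \<Sum>i\<le>n. b k i * x k ^ (q ^ i)))"

text \<open>Hom_K(A,G_a) is a finitely generated K[T]-module (T.f = f o Phi(T))\<close>
definition hom_fin_gen :: "nat \<Rightarrow> 'c::field set \<Rightarrow> nat \<Rightarrow> (nat \<Rightarrow> nat \<Rightarrow> 'c) list \<Rightarrow> bool" where
  "hom_fin_gen q K m as \<longleftrightarrow> (\<exists>gs. (\<forall>g\<in>set gs. hom_Ga q K m g) \<and>
      (\<forall>h. hom_Ga q K m h \<longrightarrow> (\<exists>N c. (\<forall>j l. c j l \<in> K) \<and>
          h = (\<lambda>x. \<Sum>j<length gs. \<Sum>l\<le>N. c j l * (gs ! j) ((twist_apply m q as ^^ l) x)))))"

definition abelian_Tmodule :: "nat \<Rightarrow> 'c::field \<Rightarrow> nat \<Rightarrow> (nat \<Rightarrow> nat \<Rightarrow> 'c) list \<Rightarrow> bool" where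
  "abelian_Tmodule q T m as \<longleftrightarrow> (\<exists>K. is_subfield K \<and> K \<subseteq> kbar q T \<and>
      Tmodule_over q T K m as \<and> hom_fin_gen q K m as)"

text \<open>exponential: entire F_q-linear map sum_l E_l z^(q^l), E_0 = I,
  with e(dPhi(T) z) = Phi(T)(e z)\<close>
definition is_exponential :: "('c::field \<Rightarrow> real) \<Rightarrow> nat \<Rightarrow> nat \<Rightarrow> (nat \<Rightarrow> nat \<Rightarrow> 'c) list \<Rightarrow>
    ((nat \<Rightarrow> 'c) \<Rightarrow> (nat \<Rightarrow> 'c)) \<Rightarrow> bool" where
  "is_exponential absC q m as e \<longleftrightarrow> (\<exists>E :: nat \<Rightarrow> nat \<Rightarrow> nat \<Rightarrow> 'c.
      (\<forall>i<m. \<forall>j<m. E 0 i j = (if i = j then 1 else 0)) \<and>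
      (\<forall>z\<in>cvec m. e z \<in> cvec m \<and>
         (\<forall>i<m. conv absC (\<lambda>n. \<Sum>l<n. \<Sum>j<m. E l i j * z j ^ (q ^ l)) (e z i))) \<and>
      (\<forall>z\<in>cvec m. e (mat_vec m (as ! 0) z) = twist_apply m q as (e z)))"

definition uniformizable :: "('c::field \<Rightarrow> real) \<Rightarrow> nat \<Rightarrow> nat \<Rightarrow> (nat \<Rightarrow> nat \<Rightarrow> 'c) list \<Rightarrow> bool" where
  "uniformizable absC q m as \<longleftrightarrow>
     (\<exists>e. is_exponential absC q m as e \<and> e ` cvec m = cvec m)"

definition polyfun :: "nat \<Rightarrow> ((nat \<Rightarrow> 'c::field) \<Rightarrow> 'c) \<Rightarrow> bool" where
  "polyfun m f \<longleftrightarrow> (\<exists>S c. finite S \<and>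
      (\<forall>x. f x = (\<Sum>\<alpha>\<in>S. c \<alpha> * (\<Prod>i<m. x i ^ \<alpha> i))))"

definition zar_closed :: "nat \<Rightarrow> (nat \<Rightarrow> 'c::field) set \<Rightarrow> bool" where
  "zar_closed m Z \<longleftrightarrow> (\<exists>P. (\<forall>f\<in>P. polyfun m f) \<and> Z = {x \<in> cvec m. \<forall>f\<in>P. f x = 0})"

definition zar_irreducible :: "nat \<Rightarrow> (nat \<Rightarrow> 'c::field) set \<Rightarrow> bool" where
  "zar_irreducible m Z \<longleftrightarrow> Z \<noteq> {} \<and>
     (\<forall>Z1 Z2. zar_closed m Z1 \<longrightarrow> zar_closed m Z2 \<longrightarrow> Z \<subseteq> Z1 \<union> Z2 \<longrightarrow> Z \<subseteq> Z1 \<or> Z \<subseteq> Z2)"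

definition zar_connected :: "nat \<Rightarrow> (nat \<Rightarrow> 'c::field) set \<Rightarrow> bool" where
  "zar_connected m Z \<longleftrightarrow> Z \<noteq> {} \<and>
     (\<forall>Z1 Z2. zar_closed m Z1 \<longrightarrow> zar_closed m Z2 \<longrightarrow> Z \<subseteq> Z1 \<union> Z2 \<longrightarrow> Z \<inter> Z1 \<inter> Z2 = {}
        \<longrightarrow> Z \<subseteq> Z1 \<or> Z \<subseteq> Z2)"

definition subvariety :: "nat \<Rightarrow> (nat \<Rightarrow> 'c::field) set \<Rightarrow> bool" where
  "subvariety m X \<longleftrightarrow> zar_closed m X \<and> zar_irreducible m X"

definition sub_Tmodule :: "nat \<Rightarrow> nat \<Rightarrow> (nat \<Rightarrow> nat \<Rightarrow> 'c::field) list \<Rightarrow> (nat \<Rightarrow> 'c) set \<Rightarrow> bool" where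
  "sub_Tmodule q m as B \<longleftrightarrow> zar_closed m B \<and> (\<lambda>_. 0) \<in> B \<and>
     (\<forall>x\<in>B. \<forall>y\<in>B. (\<lambda>i. x i - y i) \<in> B) \<and> zar_connected m B \<and>
     twist_apply m q as ` B \<subseteq> B"

definition translate :: "(nat \<Rightarrow> 'c::field) \<Rightarrow> (nat \<Rightarrow> 'c) set \<Rightarrow> (nat \<Rightarrow> 'c) set" where
  "translate x B = (\<lambda>b i. x i + b i) ` B"

definition torsion_set :: "nat \<Rightarrow> nat \<Rightarrow> (nat \<Rightarrow> nat \<Rightarrow> 'c::field) list \<Rightarrow> (nat \<Rightarrow> 'c) set \<Rightarrow> bool" where
  "torsion_set q m as Y \<longleftrightarrow> (\<exists>x B. x \<in> torsion q m as \<and> sub_Tmodule q m as B \<and>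
      B \<noteq> {(\<lambda>_. 0)} \<and> B \<noteq> cvec m \<and> Y = translate x B)"

end

theory Submission
  imports Defs
begin


lemma frob_p:
  fixes x y :: "'c::field"
  assumes "prime p" "CHAR('c) = p"
  shows "(x + y) ^ p = x ^ p + y ^ p"
proof -
  have p0: "p > 0" using assms prime_gt_0_nat by blast
  have "(x + y) ^ p = (\<Sum>k\<le>p. of_nat (p choose k) * x ^ k * y ^ (p - k))"
    by (simp add: binomial_ring)
  also have "\<dots> = (\<Sum>k\<in>{0,p}. of_nat (p choose k) * x ^ k * y ^ (p - k))"
  proof (rule sum.mono_neutral_right)
    show "\<forall>i\<in>{..p} - {0, p}. of_nat (p choose i) * x ^ i * y ^ (p - i) = 0"
    proof
      fix i assume i: "i \<in> {..p} - {0, p}"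
      have "p dvd (p choose i)" using i assms dvd_choose_prime[of i p] by auto
      hence "(of_nat (p choose i) :: 'c) = 0" using assms of_nat_eq_0_iff_char_dvd by metis
      thus "of_nat (p choose i) * x ^ i * y ^ (p - i) = 0" by simp
    qed
  qed auto
  also have "\<dots> = x ^ p + y ^ p" using p0 by (simp add: add.commute)
  finally show ?thesis .
qed

lemma frob_q:
  fixes x y :: "'c::field"
  assumes "prime p" "CHAR('c) = p"
  shows "(x + y) ^ (p ^ n) = x ^ (p ^ n) + y ^ (p ^ n)"
proof (induction n)
  case (Suc n)
  have "(x + y) ^ (p ^ Suc n) = ((x + y) ^ (p ^ n)) ^ p" by (simp only: power_Suc2 power_mult)
  also have "\<dots> = (x ^ (p ^ n)) ^ p + (y ^ (p ^ n)) ^ p" using Suc frob_p[OF assms] by simp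
  also have "\<dots> = x ^ (p ^ Suc n) + y ^ (p ^ Suc n)" by (simp only: power_Suc2 power_mult)
  finally show ?case .
qed simp



locale tset =
  fixes absC :: "'c::field \<Rightarrow> real" and T :: 'c and p n q :: nat
  assumes pr: "prime p" and ch: "CHAR('c) = p" and n1: "n \<ge> 1" and qdef: "q = p ^ n"
    and CM: "C_model absC q T"
begin

lemma frob_add: "(x + y) ^ q = x ^ q + (y::'c) ^ q"
  using frob_q[OF pr ch] qdef by simp

lemma q_ge2: "q \<ge> 2"
proof -
  have "p \<ge> 2" using pr prime_ge_2_nat by blast
  hence "p ^ 1 \<le> p ^ n" using n1 by (intro power_increasing) auto
  thus ?thesis using qdef \<open>p \<ge> 2\<close> by simp
qed

lemma q_pos: "q > 0" using q_ge2 by simp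

lemma frob_zero[simp]: "(0::'c) ^ q = 0" using q_pos by simp

lemma frob_neg: "(- x) ^ q = - ((x::'c) ^ q)"
proof -
  have "(x + - x) ^ q = x ^ q + (- x) ^ q" by (rule frob_add)
  hence "0 = x ^ q + (- x) ^ q" by simp
  thus ?thesis by (simp add: eq_neg_iff_add_eq_0 add.commute)
qed

lemma frob_diff: "(x - y) ^ q = x ^ q - (y::'c) ^ q"
  using frob_add[of x "-y"] frob_neg[of y] by simp

lemma frob_sum: "finite A \<Longrightarrow> (\<Sum>i\<in>A. f i) ^ q = (\<Sum>i\<in>A. (f i :: 'c) ^ q)"
  by (induction A rule: finite_induct) (auto simp: frob_add)

lemma frob_of_nat: "(of_nat k :: 'c) ^ q = of_nat k"
  by (induction k) (auto simp: frob_add)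

lemma frob_pow: "(x + y) ^ (q ^ l) = x ^ (q ^ l) + (y::'c) ^ (q ^ l)"
proof (induction l)
  case (Suc l)
  have "(x + y) ^ (q ^ Suc l) = ((x + y) ^ (q ^ l)) ^ q" by (simp only: power_Suc2 power_mult)
  also have "\<dots> = (x ^ (q ^ l)) ^ q + (y ^ (q ^ l)) ^ q" using Suc frob_add by simp
  also have "\<dots> = x ^ (q ^ Suc l) + y ^ (q ^ Suc l)" by (simp only: power_Suc2 power_mult)
  finally show ?case .
qed simp

lemma zero_qpow[simp]: "(0::'c) ^ (q ^ l) = 0" using q_pos by simp

lemma frob_pow_neg: "(- x) ^ (q ^ l) = - ((x::'c) ^ (q ^ l))"
  using frob_pow[of x "-x" l] by (simp add: eq_neg_iff_add_eq_0 add.commute)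

lemma frob_pow_diff: "(x - y) ^ (q ^ l) = x ^ (q ^ l) - (y::'c) ^ (q ^ l)"
  using frob_pow[of x "-y"] frob_pow_neg[of y] by simp

lemma frob_pow_sum: "finite A \<Longrightarrow> (\<Sum>i\<in>A. f i) ^ (q ^ l) = (\<Sum>i\<in>A. (f i :: 'c) ^ (q ^ l))"
  by (induction A rule: finite_induct) (auto simp: frob_pow)

lemma Fq_add: "x \<in> Fq q \<Longrightarrow> y \<in> Fq q \<Longrightarrow> x + (y::'c) \<in> Fq q"
  by (simp add: Fq_def frob_add)
lemma Fq_mult: "x \<in> Fq q \<Longrightarrow> y \<in> Fq q \<Longrightarrow> x * (y::'c) \<in> Fq q"
  by (simp add: Fq_def power_mult_distrib)
lemma Fq_neg: "x \<in> Fq q \<Longrightarrow> - (x::'c) \<in> Fq q"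
  by (simp add: Fq_def frob_neg)
lemma Fq_0: "(0::'c) \<in> Fq q" by (simp add: Fq_def)
lemma Fq_1: "(1::'c) \<in> Fq q" by (simp add: Fq_def)
lemma Fq_sum: "finite A \<Longrightarrow> (\<And>i. i \<in> A \<Longrightarrow> f i \<in> Fq q) \<Longrightarrow> (\<Sum>i\<in>A. f i :: 'c) \<in> Fq q"
  by (induction A rule: finite_induct) (auto simp: Fq_0 Fq_add)

definition FP :: "'c poly set" where "FP = {a. \<forall>j. coeff a j \<in> Fq q}"

lemma FP_add: "a \<in> FP \<Longrightarrow> b \<in> FP \<Longrightarrow> a + b \<in> FP"
  by (simp add: FP_def Fq_add)
lemma FP_neg: "a \<in> FP \<Longrightarrow> - a \<in> FP"
  by (simp add: FP_def Fq_neg)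
lemma FP_mult: "a \<in> FP \<Longrightarrow> b \<in> FP \<Longrightarrow> a * b \<in> FP"
  unfolding FP_def
proof (intro CollectI allI)
  fix j assume "a \<in> {a. \<forall>j. coeff a j \<in> Fq q}" "b \<in> {a. \<forall>j. coeff a j \<in> Fq q}"
  hence A: "\<forall>j. coeff a j \<in> Fq q" "\<forall>j. coeff b j \<in> Fq q" by auto
  show "coeff (a * b) j \<in> Fq q" unfolding coeff_mult
    by (rule Fq_sum) (use A Fq_mult in auto)
qed
lemma FP_0: "0 \<in> FP" by (simp add: FP_def Fq_0)
lemma FP_1: "1 \<in> FP" by (auto simp: FP_def coeff_1 Fq_0 Fq_1)
lemma FP_X: "[:0, 1:] \<in> FP" by (auto simp: FP_def coeff_pCons Fq_0 Fq_1 split: nat.split)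

abbreviation K where "K \<equiv> kfield q T"

lemma K_intro: "a \<in> FP \<Longrightarrow> b \<in> FP \<Longrightarrow> poly b T \<noteq> 0 \<Longrightarrow> poly a T / poly b T \<in> K"
  unfolding kfield_def FP_def by blast

lemma K_elim: "x \<in> K \<Longrightarrow> \<exists>a b. a \<in> FP \<and> b \<in> FP \<and> poly b T \<noteq> 0 \<and> x = poly a T / poly b T"
  unfolding kfield_def FP_def by blast

lemma K_poly: "a \<in> FP \<Longrightarrow> poly a T \<in> K"
  using K_intro[of a 1] FP_1 by simp

lemma K_0: "0 \<in> K" using K_poly[OF FP_0] by simp
lemma K_1: "1 \<in> K" using K_poly[OF FP_1] by simp
lemma K_T: "T \<in> K" using K_poly[OF FP_X] by simp

lemma K_add: "x \<in> K \<Longrightarrow> y \<in> K \<Longrightarrow> x + y \<in> K"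
proof -
  assume "x \<in> K" "y \<in> K"
  then obtain a b c d where ab: "a \<in> FP" "b \<in> FP" "poly b T \<noteq> 0" "x = poly a T / poly b T"
    and cd: "c \<in> FP" "d \<in> FP" "poly d T \<noteq> 0" "y = poly c T / poly d T"
    using K_elim by metis
  have "x + y = poly (a * d + c * b) T / poly (b * d) T"
    using ab(3) cd(3) by (simp add: ab(4) cd(4) add_frac_eq)
  moreover have "poly (a * d + c * b) T / poly (b * d) T \<in> K"
    using ab cd by (intro K_intro) (auto intro: FP_add FP_mult)
  ultimately show ?thesis by simp
qed

lemma K_mult: "x \<in> K \<Longrightarrow> y \<in> K \<Longrightarrow> x * y \<in> K"
proof -
  assume "x \<in> K" "y \<in> K"
  then obtain a b c d where ab: "a \<in> FP" "b \<in> FP" "poly b T \<noteq> 0" "x = poly a T / poly b T"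
    and cd: "c \<in> FP" "d \<in> FP" "poly d T \<noteq> 0" "y = poly c T / poly d T"
    using K_elim by metis
  have "x * y = poly (a * c) T / poly (b * d) T"
    by (simp add: ab(4) cd(4))
  moreover have "poly (a * c) T / poly (b * d) T \<in> K"
    using ab cd by (intro K_intro) (auto intro: FP_mult)
  ultimately show ?thesis by simp
qed

lemma K_neg: "x \<in> K \<Longrightarrow> - x \<in> K"
proof -
  assume "x \<in> K"
  then obtain a b where ab: "a \<in> FP" "b \<in> FP" "poly b T \<noteq> 0" "x = poly a T / poly b T"
    using K_elim by metis
  have "- x = poly (- a) T / poly b T" using ab by simp
  moreover have "poly (- a) T / poly b T \<in> K" using ab by (intro K_intro FP_neg)
  ultimately show ?thesis by simp
qed

lemma K_diff: "x \<in> K \<Longrightarrow> y \<in> K \<Longrightarrow> x - y \<in> K"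
  using K_add K_neg by (metis diff_conv_add_uminus)

lemma K_inv: "x \<in> K \<Longrightarrow> inverse x \<in> K"
proof -
  assume "x \<in> K"
  then obtain a b where ab: "a \<in> FP" "b \<in> FP" "poly b T \<noteq> 0" "x = poly a T / poly b T"
    using K_elim by metis
  show ?thesis
  proof (cases "poly a T = 0")
    case True thus ?thesis using ab K_0 by simp
  next
    case False
    have "inverse x = poly b T / poly a T" using ab by simp
    thus ?thesis using ab False K_intro by simp
  qed
qed

lemma K_pow: "x \<in> K \<Longrightarrow> x ^ k \<in> K"
  by (induction k) (auto simp: K_1 K_mult)

lemma K_of_nat: "(of_nat k :: 'c) \<in> K"
  by (induction k) (auto simp: K_0 K_1 K_add)

lemma K_sum: "finite A \<Longrightarrow> (\<And>i. i \<in> A \<Longrightarrow> f i \<in> K) \<Longrightarrow> (\<Sum>i\<in>A. f i) \<in> K"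
  by (induction A rule: finite_induct) (auto simp: K_0 K_add)

lemma K_subfield: "is_subfield K"
  unfolding is_subfield_def by (simp add: K_0 K_1 K_add K_diff K_mult K_inv)

lemma K_kbar: "K \<subseteq> kbar q T"
proof
  fix x assume x: "x \<in> K"
  have "[:- x, 1:] \<noteq> 0" by simp
  moreover have "\<forall>j. coeff [:- x, 1:] j \<in> K"
    using x K_neg K_0 K_1 by (auto simp: coeff_pCons split: nat.split)
  moreover have "poly [:- x, 1:] x = 0" by simp
  ultimately show "x \<in> kbar q T" unfolding kbar_def algebraic_over_def by blast
qed

end


definition a0 :: "'c::field \<Rightarrow> nat \<Rightarrow> nat \<Rightarrow> 'c" where
  "a0 T = (\<lambda>i j. if i = j then T else if i = 0 \<and> j = 1 then 1 else 0)"
definition a1 :: "nat \<Rightarrow> nat \<Rightarrow> 'c::field" where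
  "a1 = (\<lambda>i j. if i = j then 1 else 0)"
definition asT :: "'c::field \<Rightarrow> (nat \<Rightarrow> nat \<Rightarrow> 'c) list" where
  "asT T = [a0 T, a1]"

definition Cop :: "'c::field \<Rightarrow> nat \<Rightarrow> 'c \<Rightarrow> 'c" where
  "Cop T q t = T * t + t ^ q"

primrec Pc :: "'c::field \<Rightarrow> nat \<Rightarrow> nat \<Rightarrow> nat \<Rightarrow> 'c" where
  "Pc T q 0 i = (if i = 0 then 1 else 0)"
| "Pc T q (Suc l) i = T * Pc T q l i + (if i = 0 then 0 else (Pc T q l (i - 1)) ^ q)"

context tset begin

abbreviation "CC \<equiv> Cop T q"
abbreviation "Cpow l \<equiv> CC ^^ l"
abbreviation "tw \<equiv> twist_apply 2 q (asT T)"

lemma tw_eq: "tw x = (\<lambda>i. if i = 0 then CC (x 0) + x 1 else if i = 1 then CC (x 1) else 0)"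
  by (rule ext) (auto simp: twist_apply_def asT_def a0_def a1_def numeral_2_eq_2 lessThan_Suc Cop_def)

lemma Cop_add: "CC (x + y) = CC x + CC y"
  by (simp add: Cop_def frob_add algebra_simps)
lemma Cop_0[simp]: "CC 0 = 0" by (simp add: Cop_def)
lemma Cop_ofnat: "CC (of_nat k * x) = of_nat k * CC x"
  by (simp add: Cop_def power_mult_distrib frob_of_nat algebra_simps)

lemma Cpow_add: "Cpow l (x + y) = Cpow l x + Cpow l y"
  by (induction l) (auto simp: Cop_add)
lemma Cpow_0[simp]: "Cpow l 0 = 0"
  by (induction l) auto
lemma Cpow_ofnat: "Cpow l (of_nat k * x) = of_nat k * Cpow l x"
  by (induction l) (auto simp: Cop_ofnat)

lemma tw_pow:
  "(tw ^^ l) x 0 = Cpow l (x 0) + of_nat l * Cpow (l - 1) (x 1) \<and> (tw ^^ l) x 1 = Cpow l (x 1)"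
proof (induction l)
  case 0 thus ?case by simp
next
  case (Suc l)
  have e0: "(tw ^^ Suc l) x 0 = CC ((tw ^^ l) x 0) + (tw ^^ l) x 1" by (simp add: tw_eq)
  have e1: "(tw ^^ Suc l) x 1 = CC ((tw ^^ l) x 1)" by (simp add: tw_eq)
  show ?case
  proof (cases l)
    case 0 thus ?thesis using e0 e1 Suc by simp
  next
    case (Suc k)
    have "CC (Cpow (l - 1) (x 1)) = Cpow l (x 1)" using Suc by simp
    thus ?thesis using e0 e1 \<open>(tw ^^ l) x 0 = _ \<and> _\<close>
      by (simp add: Cop_add Cop_ofnat algebra_simps)
  qed
qed

lemma tw_pow1: "(tw ^^ l) x (Suc 0) = Cpow l (x (Suc 0))"
  using tw_pow[of l x] by simp

lemma tw_pow_hi: "i \<ge> 2 \<Longrightarrow> (tw ^^ Suc l) x i = 0"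
  by (simp add: tw_eq)

lemma Pc_zero: "l < i \<Longrightarrow> Pc T q l i = 0"
  by (induction l arbitrary: i) auto

lemma Pc_top: "Pc T q l l = 1"
  by (induction l) (auto simp: Pc_zero)

lemma Pc_K: "Pc T q l i \<in> K"
  by (induction l arbitrary: i) (auto simp: K_0 K_1 K_T K_add K_mult K_pow)

lemma Cpow_expand: "l \<le> N \<Longrightarrow> Cpow l t = (\<Sum>i\<le>N. Pc T q l i * t ^ (q ^ i))"
proof (induction l arbitrary: N)
  case 0
  have "(\<Sum>i\<le>N. Pc T q 0 i * t ^ (q ^ i)) = (\<Sum>i\<in>{0}. Pc T q 0 i * t ^ (q ^ i))"
    by (rule sum.mono_neutral_right) auto
  thus ?case by simp
next
  case (Suc l)
  then obtain M where M: "N = Suc M" by (cases N) auto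
  have IH: "Cpow l t = (\<Sum>i\<le>N. Pc T q l i * t ^ (q ^ i))" using Suc by simp
  have "Cpow (Suc l) t = T * Cpow l t + (Cpow l t) ^ q" by (simp add: Cop_def)
  also have "(Cpow l t) ^ q = (\<Sum>i\<le>N. (Pc T q l i) ^ q * t ^ (q ^ Suc i))"
    unfolding IH by (simp add: frob_sum power_mult_distrib power_mult[symmetric] mult.commute)
  also have "\<dots> = (\<Sum>i\<le>M. (Pc T q l i) ^ q * t ^ (q ^ Suc i))"
    using Suc.prems M by (simp add: Pc_zero)
  also have "\<dots> = (\<Sum>i\<le>N. (if i = 0 then 0 else (Pc T q l (i - 1)) ^ q) * t ^ (q ^ i))"
    unfolding M by (subst sum.atMost_Suc_shift) simp
  finally show ?case unfolding IH
    by (simp add: sum_distrib_left sum.distrib[symmetric] algebra_simps)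
qed

lemma UL:
  "(\<forall>i. b i \<in> K) \<Longrightarrow> \<exists>c. (\<forall>l. c l \<in> K) \<and>
     (\<forall>t. (\<Sum>i\<le>N. b i * t ^ (q ^ i)) = (\<Sum>l\<le>N. c l * Cpow l t))"
proof (induction N arbitrary: b)
  case 0
  thus ?case by (intro exI[of _ b]) simp
next
  case (Suc n)
  define \<beta> where "\<beta> = b (Suc n)"
  define b' where "b' i = b i - \<beta> * Pc T q (Suc n) i" for i
  have b'K: "\<forall>i. b' i \<in> K" using Suc.prems by (simp add: b'_def \<beta>_def K_diff K_mult Pc_K del: Pc.simps)
  obtain c' where c': "\<forall>l. c' l \<in> K" "\<forall>t. (\<Sum>i\<le>n. b' i * t ^ (q ^ i)) = (\<Sum>l\<le>n. c' l * Cpow l t)"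
    using Suc.IH[OF b'K] by blast
  define c where "c l = (if l = Suc n then \<beta> else c' l)" for l
  have "\<forall>l. c l \<in> K" using c' Suc.prems by (simp add: c_def \<beta>_def)
  moreover have "(\<Sum>i\<le>Suc n. b i * t ^ (q ^ i)) = (\<Sum>l\<le>Suc n. c l * Cpow l t)" for t
  proof -
    have E: "Cpow (Suc n) t = (\<Sum>i\<le>Suc n. Pc T q (Suc n) i * t ^ (q ^ i))"
      by (rule Cpow_expand) simp
    have A: "\<beta> * Cpow (Suc n) t = (\<Sum>i\<le>n. \<beta> * Pc T q (Suc n) i * t ^ (q ^ i)) + \<beta> * t ^ (q ^ Suc n)"
      unfolding E by (simp add: sum_distrib_left distrib_left Pc_top mult.assoc del: Pc.simps funpow.simps)
    have "(\<Sum>i\<le>Suc n. b i * t ^ (q ^ i)) = (\<Sum>i\<le>n. b' i * t ^ (q ^ i)) + \<beta> * Cpow (Suc n) t"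
      unfolding A by (simp add: b'_def \<beta>_def algebra_simps sum_subtractf del: funpow.simps)
    also have "\<dots> = (\<Sum>l\<le>Suc n. c l * Cpow l t)"
      using c' by (simp add: c_def del: funpow.simps)
    finally show ?thesis .
  qed
  ultimately show ?case by blast
qed

definition gs :: "((nat \<Rightarrow> 'c) \<Rightarrow> 'c) list" where "gs = [\<lambda>x. x 0, \<lambda>x. x 1]"

lemma gs_hom: "g \<in> set gs \<Longrightarrow> hom_Ga q K 2 g"
proof -
  assume "g \<in> set gs"
  hence disj: "g = (\<lambda>x. x 0) \<or> g = (\<lambda>x. x 1)" by (simp add: gs_def)
  have "\<exists>k0. k0 < (2::nat) \<and> g = (\<lambda>x. x k0)"
  proof (cases "g = (\<lambda>x. x 0)")
    case True thus ?thesis by (intro exI[of _ 0]) simp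
  next
    case False thus ?thesis using disj by (intro exI[of _ 1]) simp
  qed
  then obtain k0 where k0: "k0 < (2::nat)" "g = (\<lambda>x. x k0)" by blast
  define b where "b k i = (if k = k0 then 1 else (0::'c))" for k i :: nat
  have "g = (\<lambda>x. \<Sum>k<2. \<Sum>i\<le>0. b k i * x k ^ (q ^ i))"
    using k0 by (auto simp: b_def numeral_2_eq_2 lessThan_Suc less_Suc_eq)
  moreover have "\<forall>k i. b k i \<in> K" by (simp add: b_def K_0 K_1)
  ultimately show ?thesis unfolding hom_Ga_def by blast
qed

lemma hom_fg: "hom_fin_gen q K 2 (asT T)"
  unfolding hom_fin_gen_def
proof (intro exI[of _ gs] conjI allI impI)
  show "\<forall>g\<in>set gs. hom_Ga q K 2 g" using gs_hom by blast
next
  fix h assume "hom_Ga q K 2 h"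
  then obtain n b where b: "\<forall>k i. b k i \<in> K" and h: "h = (\<lambda>x. \<Sum>k<2. \<Sum>i\<le>n. b k i * x k ^ (q ^ i))"
    unfolding hom_Ga_def by blast
  obtain c0 where c0: "\<forall>l. c0 l \<in> K" "\<forall>t. (\<Sum>i\<le>n. b 0 i * t ^ (q ^ i)) = (\<Sum>l\<le>n. c0 l * Cpow l t)"
    using UL[of "b 0" n] b by blast
  define b1 where "b1 i = b 1 i - (\<Sum>l\<le>n. c0 l * of_nat l * Pc T q (l - 1) i)" for i
  have b1K: "\<forall>i. b1 i \<in> K" using b c0 by (auto simp: b1_def intro!: K_diff K_sum K_mult K_of_nat Pc_K)
  obtain c1 where c1: "\<forall>l. c1 l \<in> K" "\<forall>t. (\<Sum>i\<le>n. b1 i * t ^ (q ^ i)) = (\<Sum>l\<le>n. c1 l * Cpow l t)"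
    using UL[OF b1K] by blast
  define c where "c j l = (if j = 0 then c0 l else c1 l)" for j :: nat and l
  have "\<forall>j l. c j l \<in> K" using c0 c1 by (simp add: c_def)
  moreover have "h x = (\<Sum>j<length gs. \<Sum>l\<le>n. c j l * (gs ! j) ((tw ^^ l) x))" for x
  proof -
    have L2: "\<And>F::nat\<Rightarrow>'c. (\<Sum>j<length gs. F j) = F 0 + F 1" by (simp add: gs_def numeral_2_eq_2)
    have S: "(\<Sum>l\<le>n. c0 l * (of_nat l * Cpow (l - 1) (x 1)))
         = (\<Sum>i\<le>n. (\<Sum>l\<le>n. c0 l * of_nat l * Pc T q (l - 1) i) * x 1 ^ (q ^ i))"
    proof -
      have "(\<Sum>l\<le>n. c0 l * (of_nat l * Cpow (l - 1) (x 1)))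
          = (\<Sum>l\<le>n. \<Sum>i\<le>n. c0 l * of_nat l * Pc T q (l - 1) i * x 1 ^ (q ^ i))"
        by (intro sum.cong refl) (simp add: Cpow_expand[of _ n] sum_distrib_left mult.assoc del: funpow.simps)
      also have "\<dots> = (\<Sum>i\<le>n. \<Sum>l\<le>n. c0 l * of_nat l * Pc T q (l - 1) i * x 1 ^ (q ^ i))"
        by (rule sum.swap)
      also have "\<dots> = (\<Sum>i\<le>n. (\<Sum>l\<le>n. c0 l * of_nat l * Pc T q (l - 1) i) * x 1 ^ (q ^ i))"
        by (simp add: sum_distrib_right)
      finally show ?thesis .
    qed
    have "(\<Sum>j<length gs. \<Sum>l\<le>n. c j l * (gs ! j) ((tw ^^ l) x))
        = (\<Sum>l\<le>n. c0 l * (Cpow l (x 0) + of_nat l * Cpow (l - 1) (x 1))) + (\<Sum>l\<le>n. c1 l * Cpow l (x 1))"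
      by (simp only: L2) (simp add: gs_def c_def tw_pow tw_pow1 del: funpow.simps)
    also have "\<dots> = (\<Sum>l\<le>n. c0 l * Cpow l (x 0)) + (\<Sum>l\<le>n. c0 l * (of_nat l * Cpow (l - 1) (x 1)))
                 + (\<Sum>l\<le>n. c1 l * Cpow l (x 1))"
      by (simp add: distrib_left sum.distrib del: funpow.simps)
    also have "\<dots> = (\<Sum>i\<le>n. b 0 i * x 0 ^ (q ^ i)) + (\<Sum>i\<le>n. b 1 i * x 1 ^ (q ^ i))"
      unfolding S c0(2)[rule_format, symmetric] c1(2)[rule_format, symmetric]
      by (simp add: b1_def algebra_simps sum_subtractf sum.distrib[symmetric])
    also have "\<dots> = h x" by (simp add: h numeral_2_eq_2 lessThan_Suc)
    finally show ?thesis by simp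
  qed
  ultimately show "\<exists>N c. (\<forall>j l. c j l \<in> K) \<and>
        h = (\<lambda>x. \<Sum>j<length gs. \<Sum>l\<le>N. c j l * (gs ! j) ((tw ^^ l) x))"
    by blast
qed

end


primrec Ec :: "'c::field \<Rightarrow> nat \<Rightarrow> nat \<Rightarrow> 'c" where
  "Ec T q 0 = 1"
| "Ec T q (Suc l) = Ec T q l ^ q / (T ^ (q ^ Suc l) - T)"

context tset begin

abbreviation "a \<equiv> absC"
abbreviation "R \<equiv> absC T"

lemma AV: "abs_value absC" using CM by (simp add: C_model_def)
lemma R_gt1: "R > 1" using CM by (simp add: C_model_def)
lemma complete: "complete_wrt absC" using CM by (simp add: C_model_def)
lemma algc: "alg_closed_field TYPE('c)" using CM by (simp add: C_model_def)

lemma a_nonneg: "a x \<ge> 0" using AV by (simp add: abs_value_def)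
lemma a_zero_iff: "a x = 0 \<longleftrightarrow> x = 0" using AV by (simp add: abs_value_def)
lemma a_mult: "a (x * y) = a x * a y" using AV by (simp add: abs_value_def)
lemma a_ultra: "a (x + y) \<le> max (a x) (a y)" using AV by (simp add: abs_value_def)

lemma a_0[simp]: "a 0 = 0" using a_zero_iff by simp
lemma a_1[simp]: "a 1 = 1"
proof -
  have "a 1 = a 1 * a 1" using a_mult[of 1 1] by simp
  moreover have "a 1 \<noteq> 0" using a_zero_iff by simp
  ultimately show ?thesis by simp
qed
lemma a_m1: "a (-1) = 1"
proof -
  have "a (-1) * a (-1) = 1" using a_mult[of "-1" "-1"] by simp
  hence "a (-1) ^ 2 = 1 ^ 2" by (simp add: power2_eq_square)
  thus ?thesis using a_nonneg[of "-1"] by (simp add: power2_eq_1_iff)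
qed
lemma a_neg[simp]: "a (- x) = a x"
  using a_mult[of "-1" x] a_m1 by simp
lemma a_sym: "a (x - y) = a (y - x)"
  using a_neg[of "x - y"] by simp
lemma a_pow: "a (x ^ k) = a x ^ k"
  by (induction k) (auto simp: a_mult)
lemma a_div: "a (x / y) = a x / a y"
proof (cases "y = 0")
  case True thus ?thesis by simp
next
  case False
  have "a (x / y) * a y = a x" using a_mult[of "x / y" y] False by simp
  moreover have "a y \<noteq> 0" using False a_zero_iff by simp
  ultimately show ?thesis by (simp add: field_simps)
qed
lemma a_ultra_diff: "a (x - y) \<le> max (a x) (a y)"
  using a_ultra[of x "-y"] by simp
lemma a_ultra_eq: "a x < a y \<Longrightarrow> a (x + y) = a y"
proof -
  assume lt: "a x < a y"
  have le: "a (x + y) \<le> a y" using a_ultra[of x y] lt by simp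
  have "a y \<le> max (a (x + y)) (a x)" using a_ultra_diff[of "x + y" x] by simp
  hence "a y \<le> a (x + y)" using lt by auto
  thus ?thesis using le by simp
qed
lemma a_sum_lt: "finite A \<Longrightarrow> e > 0 \<Longrightarrow> (\<And>i. i \<in> A \<Longrightarrow> a (f i) < e) \<Longrightarrow> a (sum f A) < e"
proof (induction A rule: finite_induct)
  case (insert x F)
  have "a (f x + sum f F) \<le> max (a (f x)) (a (sum f F))" by (rule a_ultra)
  moreover have "a (f x) < e" using insert.prems by simp
  moreover have "a (sum f F) < e" using insert by simp
  ultimately show ?case using insert.hyps by simp
qed simp

lemma a_sum_le: "finite A \<Longrightarrow> B \<ge> 0 \<Longrightarrow> (\<And>i. i \<in> A \<Longrightarrow> a (f i) \<le> B) \<Longrightarrow> a (sum f A) \<le> B"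
proof (induction A rule: finite_induct)
  case (insert x F)
  have "a (f x + sum f F) \<le> max (a (f x)) (a (sum f F))" by (rule a_ultra)
  moreover have "a (f x) \<le> B" using insert.prems by simp
  moreover have "a (sum f F) \<le> B" using insert by simp
  ultimately show ?case using insert.hyps by simp
qed simp

lemma T_ne0: "T \<noteq> 0" using R_gt1 a_zero_iff by force

lemma conv_unique: "conv a s L \<Longrightarrow> conv a s M \<Longrightarrow> L = M"
proof (rule ccontr)
  assume c1: "conv a s L" and c2: "conv a s M" and ne: "L \<noteq> M"
  define e where "e = a (L - M)"
  have e: "e > 0" using ne a_zero_iff a_nonneg unfolding e_def by (metis eq_iff_diff_eq_0 less_eq_real_def)
  obtain N1 where N1: "\<forall>n\<ge>N1. a (s n - L) < e" using c1 e unfolding conv_def by blast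
  obtain N2 where N2: "\<forall>n\<ge>N2. a (s n - M) < e" using c2 e unfolding conv_def by blast
  define n where "n = max N1 N2"
  have "a (L - M) \<le> max (a (s n - M)) (a (s n - L))"
    using a_ultra_diff[of "s n - M" "s n - L"] by (simp add: algebra_simps)
  also have "\<dots> < e" using N1 N2 by (simp add: n_def)
  finally show False by (simp add: e_def)
qed

lemma conv_add: "conv a s L \<Longrightarrow> conv a t M \<Longrightarrow> conv a (\<lambda>n. s n + t n) (L + M)"
  unfolding conv_def
proof (intro allI impI)
  fix e :: real assume c1: "\<forall>e>0. \<exists>N. \<forall>n\<ge>N. a (s n - L) < e"
    and c2: "\<forall>e>0. \<exists>N. \<forall>n\<ge>N. a (t n - M) < e" and e: "e > 0"
  obtain N1 where N1: "\<forall>n\<ge>N1. a (s n - L) < e" using c1 e by blast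
  obtain N2 where N2: "\<forall>n\<ge>N2. a (t n - M) < e" using c2 e by blast
  have "\<forall>n\<ge>max N1 N2. a (s n + t n - (L + M)) < e"
  proof (intro allI impI)
    fix n assume "n \<ge> max N1 N2"
    have "a (s n + t n - (L + M)) \<le> max (a (s n - L)) (a (t n - M))"
      using a_ultra[of "s n - L" "t n - M"] by (simp add: algebra_simps)
    moreover have "a (s n - L) < e" "a (t n - M) < e" using N1 N2 \<open>n \<ge> max N1 N2\<close> by auto
    ultimately show "a (s n + t n - (L + M)) < e" by simp
  qed
  thus "\<exists>N. \<forall>n\<ge>N. a (s n + t n - (L + M)) < e" by blast
qed

lemma conv_neg: "conv a s L \<Longrightarrow> conv a (\<lambda>n. - s n) (- L)"
  unfolding conv_def using a_sym by (metis a_neg minus_diff_eq minus_diff_minus)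

lemma conv_diff: "conv a s L \<Longrightarrow> conv a t M \<Longrightarrow> conv a (\<lambda>n. s n - t n) (L - M)"
  using conv_add[of s L "\<lambda>n. - t n" "- M"] conv_neg[of t M] by simp

lemma conv_const: "conv a (\<lambda>n. c) c" unfolding conv_def by simp

lemma conv_cmult: "conv a s L \<Longrightarrow> conv a (\<lambda>n. c * s n) (c * L)"
proof (cases "c = 0")
  case True thus ?thesis by (simp add: conv_const)
next
  case False
  assume cv: "conv a s L"
  have ac: "a c > 0" using False a_zero_iff a_nonneg by (metis less_eq_real_def)
  show ?thesis unfolding conv_def
  proof (intro allI impI)
    fix e :: real assume e: "e > 0"
    obtain N where N: "\<forall>n\<ge>N. a (s n - L) < e / a c" using cv e ac unfolding conv_def
      by (meson divide_pos_pos)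
    have "\<forall>n\<ge>N. a (c * s n - c * L) < e"
    proof (intro allI impI)
      fix n assume "n \<ge> N"
      have "a (c * s n - c * L) = a c * a (s n - L)" by (simp add: a_mult[symmetric] algebra_simps)
      also have "\<dots> < a c * (e / a c)" using N \<open>n \<ge> N\<close> ac by (intro mult_strict_left_mono) auto
      also have "\<dots> = e" using ac by simp
      finally show "a (c * s n - c * L) < e" .
    qed
    thus "\<exists>N. \<forall>n\<ge>N. a (c * s n - c * L) < e" by blast
  qed
qed

lemma conv_qpow: "conv a s L \<Longrightarrow> conv a (\<lambda>n. s n ^ q) (L ^ q)"
  unfolding conv_def
proof (intro allI impI)
  fix e :: real assume cv: "\<forall>e>0. \<exists>N. \<forall>n\<ge>N. a (s n - L) < e" and e: "e > 0"
  obtain N where N: "\<forall>n\<ge>N. a (s n - L) < min e 1" using cv e by (metis min_less_iff_conj zero_less_one)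
  have "\<forall>n\<ge>N. a (s n ^ q - L ^ q) < e"
  proof (intro allI impI)
    fix n assume "n \<ge> N"
    hence h: "a (s n - L) < min e 1" using N by blast
    have "a (s n ^ q - L ^ q) = a (s n - L) ^ q" by (simp add: frob_diff[symmetric] a_pow)
    also have "\<dots> \<le> a (s n - L) ^ 1" using h a_nonneg q_pos
      by (intro power_decreasing) auto
    also have "\<dots> < e" using h by simp
    finally show "a (s n ^ q - L ^ q) < e" .
  qed
  thus "\<exists>N. \<forall>n\<ge>N. a (s n ^ q - L ^ q) < e" by blast
qed

lemma conv_shift: "conv a s L \<Longrightarrow> conv a (\<lambda>n. s (Suc n)) L"
  unfolding conv_def
proof (intro allI impI)
  fix e :: real assume cv: "\<forall>e>0. \<exists>N. \<forall>n\<ge>N. a (s n - L) < e" and e: "e > 0"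
  obtain N where N: "\<forall>n\<ge>N. a (s n - L) < e" using cv e by blast
  have "\<forall>n\<ge>N. a (s (Suc n) - L) < e" using N le_SucI by blast
  thus "\<exists>N. \<forall>n\<ge>N. a (s (Suc n) - L) < e" by blast
qed

lemma conv_le: "conv a s L \<Longrightarrow> (\<And>n. a (s n - c) \<le> B) \<Longrightarrow> a (L - c) \<le> B"
proof (rule ccontr)
  assume cv: "conv a s L" and b: "\<And>n. a (s n - c) \<le> B" and nle: "\<not> a (L - c) \<le> B"
  define e where "e = a (L - c) - B"
  have e: "e > 0" using nle by (simp add: e_def)
  obtain N where N: "\<forall>n\<ge>N. a (s N - L) < e" using cv e unfolding conv_def by blast
  have "a (L - c) \<le> max (a (s N - c)) (a (s N - L))"
    using a_ultra_diff[of "s N - c" "s N - L"] by (simp add: algebra_simps)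
  also have "\<dots> < a (L - c)" using b[of N] N e_def nle a_nonneg[of "s N - c"] by auto
  finally show False by simp
qed

lemma conv_series:
  assumes "\<forall>e>0. \<exists>N. \<forall>l\<ge>N. a (f l) < e"
  shows "\<exists>L. conv a (\<lambda>n. \<Sum>l<n. f l) L"
proof -
  have cau: "\<forall>e>0. \<exists>N. \<forall>i\<ge>N. \<forall>j\<ge>N. a ((\<Sum>l<i. f l) - (\<Sum>l<j. f l)) < e"
  proof (intro allI impI)
    fix e :: real assume e: "e > 0"
    obtain N where N: "\<forall>l\<ge>N. a (f l) < e" using assms e by blast
    have "a ((\<Sum>l<i. f l) - (\<Sum>l<j. f l)) < e" if "i \<ge> N" "j \<ge> N" for i j
    proof -
      have key: "a ((\<Sum>l<v. f l) - (\<Sum>l<u. f l)) < e" if "N \<le> u" "u \<le> v" for u v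
      proof -
        have "(\<Sum>l<v. f l) - (\<Sum>l<u. f l) = (\<Sum>l\<in>{u..<v}. f l)"
          using sum_diff_nat_ivl[of 0 u v f] that by (simp add: atLeast0LessThan)
        also have "a \<dots> < e" using that N e by (intro a_sum_lt) auto
        finally show ?thesis .
      qed
      show ?thesis
      proof (cases "j \<le> i")
        case True thus ?thesis using key[of j i] that by simp
      next
        case False thus ?thesis using key[of i j] that a_sym by simp
      qed
    qed
    thus "\<exists>N. \<forall>i\<ge>N. \<forall>j\<ge>N. a ((\<Sum>l<i. f l) - (\<Sum>l<j. f l)) < e" by blast
  qed
  have C: "\<And>s. (\<forall>e>0. \<exists>N. \<forall>i\<ge>N. \<forall>j\<ge>N. a (s i - s j) < e) \<Longrightarrow> \<exists>L. conv a s L"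
    using complete unfolding complete_wrt_def by blast
  show ?thesis by (rule C) (rule cau)
qed

end


context tset begin

lemma q_pow_ge: "l \<le> q ^ l"
proof -
  have "l < 2 ^ l" by simp
  also have "(2::nat) ^ l \<le> q ^ l" using q_ge2 by (intro power_mono) auto
  finally show ?thesis by simp
qed

lemma R_pow_mono: "i \<le> j \<Longrightarrow> R ^ i \<le> R ^ j"
  using R_gt1 by (intro power_increasing) auto

lemma R_pow_pos: "R ^ i > 0" using R_gt1 by simp

lemma geom_small: "c \<ge> 0 \<Longrightarrow> e > 0 \<Longrightarrow> \<exists>N. \<forall>k\<ge>N. c / R ^ k < e"
proof -
  assume c: "c \<ge> 0" and e: "e > 0"
  obtain N where N: "c / e < R ^ N" using real_arch_pow[OF R_gt1] by blast
  have "c / R ^ k < e" if "k \<ge> N" for k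
  proof -
    have "c / R ^ k \<le> c / R ^ N" using c R_pow_pos R_pow_mono[OF that]
      by (intro divide_left_mono) auto
    also have "\<dots> < e" using N e R_pow_pos[of N] by (simp add: field_simps)
    finally show ?thesis .
  qed
  thus ?thesis by blast
qed

lemma a_Tpow_sub: "a (T ^ (q ^ Suc l) - T) = R ^ (q ^ Suc l)"
proof -
  have "1 < q ^ Suc l" using q_ge2 by (intro one_less_power) auto
  hence "R ^ 1 < R ^ (q ^ Suc l)" using R_gt1 by (intro power_strict_increasing) auto
  hence "a (- T) < a (T ^ (q ^ Suc l))" by (simp add: a_pow)
  hence "a (- T + T ^ (q ^ Suc l)) = a (T ^ (q ^ Suc l))" by (rule a_ultra_eq)
  thus ?thesis by (simp add: a_pow)
qed

lemma Tpow_sub_ne0: "T ^ (q ^ Suc l) - T \<noteq> 0"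
  using a_Tpow_sub[of l] R_pow_pos[of "q ^ Suc l"] by (metis a_0 less_irrefl)

lemma a_Ec: "a (Ec T q l) = inverse (R ^ (l * q ^ l))"
proof (induction l)
  case 0 thus ?case by simp
next
  case (Suc l)
  have ex: "Suc l * q ^ Suc l = l * q ^ l * q + q ^ Suc l" by (simp add: algebra_simps)
  have "R ^ (Suc l * q ^ Suc l) = (R ^ (l * q ^ l)) ^ q * R ^ (q ^ Suc l)"
    unfolding ex by (simp add: power_add power_mult)
  moreover have "a (Ec T q (Suc l)) = (inverse (R ^ (l * q ^ l))) ^ q / R ^ (q ^ Suc l)"
    using Suc by (simp add: a_div a_pow a_Tpow_sub[simplified])
  ultimately show ?case by (simp add: field_simps power_inverse)
qed

lemma Ec_rec: "Ec T q (Suc l) * T ^ (q ^ Suc l) = T * Ec T q (Suc l) + Ec T q l ^ q"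
proof -
  have h: "Ec T q (Suc l) * (T ^ (q ^ Suc l) - T) = Ec T q l ^ q"
    using Tpow_sub_ne0[of l] by (simp del: power_Suc)
  have "Ec T q (Suc l) * T ^ (q ^ Suc l) = Ec T q (Suc l) * (T ^ (q ^ Suc l) - T) + T * Ec T q (Suc l)"
    by (simp add: algebra_simps del: Ec.simps power_Suc)
  thus ?thesis unfolding h by (simp only: add.commute)
qed

lemma a_term: "a (Ec T q l * z ^ (q ^ l)) = (a z / R ^ l) ^ (q ^ l)"
  by (simp add: a_mult a_Ec a_pow power_divide power_mult[symmetric] field_simps mult.commute)

lemma term_small: "\<forall>e>0. \<exists>N. \<forall>l\<ge>N. a (Ec T q l * z ^ (q ^ l)) < e"
proof (intro allI impI)
  fix e :: real assume e: "e > 0"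
  obtain N1 where N1: "2 * a z < R ^ N1" using real_arch_pow[OF R_gt1] by blast
  obtain N2 where N2: "1 / e < 2 ^ N2" using real_arch_pow[of 2 "1/e"] by auto
  have "a (Ec T q l * z ^ (q ^ l)) < e" if l: "l \<ge> max N1 N2" for l
  proof -
    have "R ^ N1 \<le> R ^ l" using l by (intro R_pow_mono) simp
    hence h: "a z / R ^ l \<le> 1 / 2" using N1 R_pow_pos[of l] by (simp add: field_simps)
    have "(a z / R ^ l) ^ (q ^ l) \<le> (1/2) ^ (q ^ l)"
      using h a_nonneg R_pow_pos by (intro power_mono) auto
    also have "\<dots> \<le> (1/2) ^ l" using q_pow_ge by (intro power_decreasing) auto
    also have "\<dots> \<le> (1/2) ^ N2" using l by (intro power_decreasing) auto
    also have "\<dots> < e" using N2 e by (simp add: field_simps power_one_over)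
    finally show ?thesis by (simp add: a_term)
  qed
  thus "\<exists>N. \<forall>l\<ge>N. a (Ec T q l * z ^ (q ^ l)) < e" by blast
qed

definition SS :: "'c \<Rightarrow> nat \<Rightarrow> 'c" where "SS z k = (\<Sum>l<k. Ec T q l * z ^ (q ^ l))"
definition eC :: "'c \<Rightarrow> 'c" where "eC z = (THE L. conv a (SS z) L)"

lemma conv_eC: "conv a (SS z) (eC z)"
proof -
  obtain L where L: "conv a (SS z) L"
    using conv_series[OF term_small[of z]] unfolding SS_def by blast
  have "conv a (SS z) (THE L. conv a (SS z) L)"
    by (rule theI[of _ L]) (use L conv_unique in blast)+
  thus ?thesis by (simp add: eC_def)
qed

lemma eC_eqI: "conv a (SS z) L \<Longrightarrow> eC z = L"
  using conv_eC conv_unique by blast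

lemma eC_add: "eC (z + w) = eC z + eC w"
proof -
  have "SS (z + w) n = SS z n + SS w n" for n
    by (simp add: SS_def frob_pow distrib_left sum.distrib)
  hence "conv a (SS (z + w)) (eC z + eC w)"
    using conv_add[OF conv_eC[of z] conv_eC[of w]] by presburger
  thus ?thesis by (rule eC_eqI)
qed

lemma eC_diff: "eC (z - w) = eC z - eC w"
  using eC_add[of "z - w" w] by simp

lemma eC_0[simp]: "eC 0 = 0"
  using eC_diff[of 0 0] by simp

lemma SS_FE: "SS (T * z) (Suc k) = T * SS z (Suc k) + (SS z k) ^ q"
proof (induction k)
  case 0 thus ?case by (simp add: SS_def)
next
  case (Suc k)
  have e1: "SS (T * z) (Suc (Suc k)) = SS (T * z) (Suc k) + Ec T q (Suc k) * T ^ (q ^ Suc k) * z ^ (q ^ Suc k)"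
    by (simp add: SS_def power_mult_distrib mult.assoc del: Ec.simps power_Suc)
  have e2: "SS z (Suc (Suc k)) = SS z (Suc k) + Ec T q (Suc k) * z ^ (q ^ Suc k)"
    by (simp add: SS_def del: Ec.simps power_Suc)
  have e3: "(SS z (Suc k)) ^ q = (SS z k) ^ q + Ec T q k ^ q * z ^ (q ^ Suc k)"
  proof -
    have "(SS z (Suc k)) ^ q = (SS z k + Ec T q k * z ^ (q ^ k)) ^ q" by (simp add: SS_def)
    also have "\<dots> = (SS z k) ^ q + Ec T q k ^ q * (z ^ (q ^ k)) ^ q"
      by (simp add: frob_add power_mult_distrib)
    also have "(z ^ (q ^ k)) ^ q = z ^ (q ^ Suc k)"
      by (simp add: power_mult[symmetric] mult.commute)
    finally show ?thesis .
  qed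
  show ?case unfolding e1 e2 e3 Suc Ec_rec by (simp add: algebra_simps)
qed

lemma eC_FE: "eC (T * z) = CC (eC z)"
proof -
  have c1: "conv a (\<lambda>n. SS (T * z) (Suc n)) (eC (T * z))"
    by (rule conv_shift[OF conv_eC])
  have "conv a (\<lambda>n. T * SS z (Suc n) + (SS z n) ^ q) (T * eC z + (eC z) ^ q)"
    by (intro conv_add conv_cmult conv_qpow conv_shift conv_eC)
  hence c2: "conv a (\<lambda>n. SS (T * z) (Suc n)) (T * eC z + (eC z) ^ q)"
    by (simp add: SS_FE)
  show ?thesis using conv_unique[OF c1 c2] by (simp add: Cop_def)
qed

lemma term_bound:
  assumes w: "a w \<le> R"
  shows "a (Ec T q (Suc l) * w ^ (q ^ Suc l)) \<le> a w / R"
proof -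
  define t where "t = a w / R"
  have t0: "t \<ge> 0" using a_nonneg R_gt1 by (simp add: t_def)
  have t1: "t \<le> 1" using w R_gt1 by (simp add: t_def)
  have Q: "1 \<le> q ^ Suc l" using q_pos by simp
  have "a (Ec T q (Suc l) * w ^ (q ^ Suc l)) = (a w / R ^ Suc l) ^ (q ^ Suc l)" by (rule a_term)
  also have "\<dots> \<le> t ^ (q ^ Suc l)"
  proof (intro power_mono)
    have "R ^ 1 \<le> R ^ Suc l" by (intro R_pow_mono) simp
    thus "a w / R ^ Suc l \<le> t" unfolding t_def using a_nonneg R_gt1
      by (intro divide_left_mono) auto
    show "0 \<le> a w / R ^ Suc l" using a_nonneg R_pow_pos by simp
  qed
  also have "\<dots> \<le> t ^ 1" using t0 t1 Q by (intro power_decreasing) auto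
  finally show ?thesis by (simp add: t_def)
qed

lemma eC_near: "a w \<le> R \<Longrightarrow> a (eC w - w) \<le> a w / R"
proof -
  assume w: "a w \<le> R"
  have c: "conv a (\<lambda>n. SS w (Suc n)) (eC w)" by (rule conv_shift[OF conv_eC])
  have "a (SS w (Suc n) - w) \<le> a w / R" for n
  proof -
    have "SS w (Suc n) = w + (\<Sum>l<n. Ec T q (Suc l) * w ^ (q ^ Suc l))"
      unfolding SS_def by (subst sum.lessThan_Suc_shift) (simp add: Ec.simps(1) del: Ec.simps(2) power_Suc)
    hence "SS w (Suc n) - w = (\<Sum>l<n. Ec T q (Suc l) * w ^ (q ^ Suc l))" by simp
    moreover have "a (\<Sum>l<n. Ec T q (Suc l) * w ^ (q ^ Suc l)) \<le> a w / R"
      using term_bound[OF w] a_nonneg R_gt1 by (intro a_sum_le) auto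
    ultimately show ?thesis by simp
  qed
  thus ?thesis by (rule conv_le[OF c])
qed

lemma eC_small: "a w \<le> R \<Longrightarrow> a (eC w) \<le> a w"
proof -
  assume w: "a w \<le> R"
  have "a (eC w) \<le> max (a (eC w - w)) (a w)" using a_ultra[of "eC w - w" w] by simp
  moreover have "a w / R \<le> a w / 1" using R_gt1 a_nonneg[of w] by (intro divide_left_mono) auto
  hence "a (eC w - w) \<le> a w" using eC_near[OF w] by simp
  ultimately show ?thesis by simp
qed

end


context tset begin

lemma LS: assumes y: "a y \<le> R" shows "\<exists>z. eC z = y"
proof -
  define zs where "zs = rec_nat y (\<lambda>k zk. zk + (y - eC zk))"
  have zs0: "zs 0 = y" and zsS: "\<And>k. zs (Suc k) = zs k + (y - eC (zs k))" by (simp_all add: zs_def)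
  define d where "d k = y - eC (zs k)" for k
  have dS: "d (Suc k) = d k - eC (d k)" for k
    by (simp add: d_def zsS eC_add)
  have R0: "R > 0" using R_gt1 by simp
  have dle: "a (d k) \<le> a y / R ^ Suc k" for k
  proof (induction k)
    case 0
    have "a (d 0) = a (eC y - y)" by (simp add: d_def zs0 a_sym)
    also have "\<dots> \<le> a y / R" using eC_near[OF y] .
    finally show ?case by simp
  next
    case (Suc k)
    have one: "1 \<le> R ^ Suc k" by (rule one_le_power) (use R_gt1 in simp)
    have "a y / R ^ Suc k \<le> a y / 1" using a_nonneg[of y] one
      by (intro divide_left_mono) auto
    hence dk: "a (d k) \<le> R" using Suc y by simp
    have "a (d (Suc k)) = a (eC (d k) - d k)" by (simp add: dS a_sym)
    also have "\<dots> \<le> a (d k) / R" by (rule eC_near[OF dk])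
    also have "\<dots> \<le> (a y / R ^ Suc k) / R" using Suc R0 by (intro divide_right_mono) auto
    also have "\<dots> = a y / R ^ Suc (Suc k)" by (simp add: field_simps)
    finally show ?case .
  qed
  have zsum: "zs k = y + (\<Sum>i<k. d i)" for k
    by (induction k) (simp_all add: zs0 zsS d_def)
  have dsmall: "\<forall>e>0. \<exists>N. \<forall>i\<ge>N. a (d i) < e"
  proof (intro allI impI)
    fix e :: real assume e: "e > 0"
    obtain N where N: "\<forall>k\<ge>N. a y / R ^ k < e" using geom_small[OF a_nonneg e] by blast
    have "\<forall>i\<ge>N. a (d i) < e" using N dle by (meson le_SucI le_less_trans)
    thus "\<exists>N. \<forall>i\<ge>N. a (d i) < e" by blast
  qed
  obtain L where L: "conv a (\<lambda>k. \<Sum>i<k. d i) L" using conv_series[OF dsmall] by blast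
  define z where "z = y + L"
  have czs: "conv a zs z" unfolding z_def using conv_add[OF conv_const L] zsum by presburger
  have c1: "conv a (\<lambda>k. eC (zs k)) (eC z)" unfolding conv_def
  proof (intro allI impI)
    fix e :: real assume e: "e > 0"
    obtain N where N: "\<forall>k\<ge>N. a (zs k - z) < min e R"
      using czs e R0 unfolding conv_def by (meson min_less_iff_conj)
    have "a (eC (zs k) - eC z) < e" if "k \<ge> N" for k
    proof -
      have h: "a (zs k - z) < min e R" using N that by blast
      have "a (eC (zs k) - eC z) = a (eC (zs k - z))" by (simp add: eC_diff)
      also have "\<dots> \<le> a (zs k - z)" using h by (intro eC_small) simp
      also have "\<dots> < e" using h by simp
      finally show ?thesis .
    qed
    thus "\<exists>N. \<forall>k\<ge>N. a (eC (zs k) - eC z) < e" by blast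
  qed
  have c2: "conv a (\<lambda>k. eC (zs k)) y" unfolding conv_def
  proof (intro allI impI)
    fix e :: real assume e: "e > 0"
    obtain N where N: "\<forall>i\<ge>N. a (d i) < e" using dsmall e by blast
    have "\<forall>k\<ge>N. a (eC (zs k) - y) < e" using N by (simp add: d_def a_sym)
    thus "\<exists>N. \<forall>k\<ge>N. a (eC (zs k) - y) < e" by blast
  qed
  show ?thesis using conv_unique[OF c1 c2] by blast
qed

lemma root_CC: "\<exists>X. CC X = w"
proof -
  define P where "P = monom (1::'c) q + [:- w, T:]"
  have "degree [:- w, T:] < degree (monom (1::'c) q)"
    using q_ge2 by (simp add: degree_monom_eq)
  hence "degree P = q" unfolding P_def by (simp add: degree_add_eq_left degree_monom_eq)
  hence "degree P \<ge> 1" using q_ge2 by simp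
  then obtain X where "poly P X = 0" using algc unfolding alg_closed_field_def by blast
  hence "CC X = w" by (simp add: P_def poly_monom Cop_def algebra_simps)
  thus ?thesis by blast
qed

lemma GS: "\<exists>z. eC z = y"
proof -
  have step: "\<forall>y. a y \<le> R ^ (q ^ j) \<longrightarrow> (\<exists>z. eC z = y)" for j
  proof (induction j)
    case 0 thus ?case using LS by simp
  next
    case (Suc j)
    show ?case
    proof (intro allI impI)
      fix y assume y: "a y \<le> R ^ (q ^ Suc j)"
      obtain X where X: "CC X = y" using root_CC by blast
      have "a X \<le> R ^ (q ^ j)"
      proof (rule ccontr)
        assume "\<not> a X \<le> R ^ (q ^ j)"
        hence big: "a X > R ^ (q ^ j)" by simp
        have "R ^ 1 \<le> R ^ (q ^ j)" using q_pos by (intro R_pow_mono) simp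
        hence XR: "a X > R" using big by simp
        have "a (T * X) = R * a X" by (simp add: a_mult)
        also have "\<dots> < a X * a X" using XR R_gt1 by (intro mult_strict_right_mono) auto
        also have "\<dots> = a X ^ 2" by (simp add: power2_eq_square)
        also have "\<dots> \<le> a X ^ q" using XR R_gt1 q_ge2 by (intro power_increasing) auto
        also have "\<dots> = a (X ^ q)" by (simp add: a_pow)
        finally have "a (T * X + X ^ q) = a (X ^ q)" by (rule a_ultra_eq)
        hence "a y = a X ^ q" using X by (simp add: Cop_def a_pow)
        also have "\<dots> > (R ^ (q ^ j)) ^ q" using big R_pow_pos[of "q ^ j"] q_pos
          by (intro power_strict_mono) (auto intro: less_imp_le)
        also have "(R ^ (q ^ j)) ^ q = R ^ (q ^ Suc j)" by (simp add: power_mult[symmetric] mult.commute)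
        finally show False using y by simp
      qed
      then obtain z where "eC z = X" using Suc by blast
      hence "eC (T * z) = y" using X eC_FE by simp
      thus "\<exists>z. eC z = y" by blast
    qed
  qed
  obtain j where j: "a y < R ^ j" using real_arch_pow[OF R_gt1] by blast
  have "R ^ j \<le> R ^ (q ^ j)" by (rule R_pow_mono[OF q_pow_ge])
  thus ?thesis using step[of j] j by simp
qed

lemma v0_ex: "\<exists>v. v \<noteq> 0 \<and> CC v = 0"
proof -
  define P where "P = monom (1::'c) (q - 1) + [:T:]"
  have q1: "q - 1 \<ge> 1" using q_ge2 by simp
  have "degree P = q - 1" unfolding P_def using q1
    by (subst degree_add_eq_left) (simp_all add: degree_monom_eq)
  then obtain v where v: "poly P v = 0" using algc q1 unfolding alg_closed_field_def by metis
  hence ve: "v ^ (q - 1) + T = 0" by (simp add: P_def poly_monom)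
  have "v \<noteq> 0" using ve q1 T_ne0 q_ge2 by (auto simp: power_0_left)
  moreover have "v ^ q = v * v ^ (q - 1)" using q_pos by (metis Suc_diff_1 power_Suc)
  hence "CC v = v * (v ^ (q - 1) + T)" by (simp add: Cop_def algebra_simps)
  hence "CC v = 0" using ve by simp
  ultimately show ?thesis by blast
qed

definition v0 where "v0 = (SOME v. v \<noteq> 0 \<and> CC v = 0)"
definition vs where "vs = rec_nat v0 (\<lambda>j v. SOME X. CC X = v)"

lemma v0: "v0 \<noteq> 0" "CC v0 = 0" using someI_ex[OF v0_ex] by (auto simp: v0_def)

lemma vs0: "vs 0 = v0" by (simp add: vs_def)
lemma vsS: "CC (vs (Suc j)) = vs j"
proof -
  have "vs (Suc j) = (SOME X. CC X = vs j)" by (simp add: vs_def)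
  thus ?thesis using someI_ex[OF root_CC[of "vs j"]] by simp
qed

lemma Cpow_vs_kill: "Cpow (Suc j) (vs j) = 0"
proof (induction j)
  case 0 thus ?case using v0 by (simp add: vs0)
next
  case (Suc j)
  have "Cpow (Suc (Suc j)) (vs (Suc j)) = Cpow (Suc j) (CC (vs (Suc j)))"
    by (simp only: funpow_Suc_right o_def)
  thus ?case using Suc vsS by simp
qed

lemma Cpow_vs_top: "Cpow j (vs j) = v0"
proof (induction j)
  case 0 thus ?case by (simp add: vs0)
next
  case (Suc j)
  have "Cpow (Suc j) (vs (Suc j)) = Cpow j (CC (vs (Suc j)))"
    by (simp only: funpow_Suc_right o_def)
  thus ?case using Suc vsS by simp
qed

lemma vs_inj: "inj vs"
proof (rule injI)
  have lt: "vs i \<noteq> vs j" if "i < j" for i j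
  proof
    assume eq: "vs i = vs j"
    have "Cpow j (vs i) = Cpow (j - Suc i) (Cpow (Suc i) (vs i))"
      using that by (metis Suc_leI funpow_add le_add_diff_inverse2 o_apply)
    also have "\<dots> = 0" by (simp add: Cpow_vs_kill del: funpow.simps)
    finally have "Cpow j (vs j) = 0" using eq by simp
    thus False using Cpow_vs_top v0 by simp
  qed
  fix i j assume "vs i = vs j"
  thus "i = j" using lt by (metis linorder_neqE_nat)
qed

end


context tset begin

lemma Tmod: "Tmodule_over q T K 2 (asT T)"
proof -
  have ent: "\<forall>l<length (asT T). \<forall>i<2. \<forall>j<2. (asT T ! l) i j \<in> K"
  proof (intro allI impI)
    fix l i j :: nat assume l: "l < length (asT T)" and i: "i < 2" and j: "j < 2"
    have "l = 0 \<or> l = 1" using l by (auto simp: asT_def)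
    thus "(asT T ! l) i j \<in> K"
      using i j by (auto simp: asT_def a0_def a1_def K_0 K_1 K_T)
  qed
  have lst: "\<exists>i<2. \<exists>j<2. last (asT T) i j \<noteq> 0"
    by (rule exI[of _ 0]) (simp add: asT_def a1_def)
  have nil: "nilpotent_mat 2 (\<lambda>i j. (asT T ! 0) i j - (if i = j then T else 0))"
    unfolding nilpotent_mat_def
  proof (intro exI[of _ 2] allI impI)
    fix i j :: nat assume i: "i < 2" and j: "j < 2"
    show "mat_pow 2 (\<lambda>i j. (asT T ! 0) i j - (if i = j then T else 0)) 2 i j = 0"
      using less_2_cases[OF i] less_2_cases[OF j]
      by (auto simp: numeral_2_eq_2 mat_mult_def mat_id_def asT_def a0_def lessThan_Suc)
  qed
  show ?thesis unfolding Tmodule_over_def using ent lst nil by (simp add: asT_def)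
qed

lemma abel: "abelian_Tmodule q T 2 (asT T)"
  unfolding abelian_Tmodule_def using K_subfield K_kbar Tmod hom_fg by blast

definition ee :: "(nat \<Rightarrow> 'c) \<Rightarrow> (nat \<Rightarrow> 'c)" where
  "ee z = (\<lambda>i. if i < 2 then eC (z i) else 0)"

lemma unif: "uniformizable absC q 2 (asT T)"
  unfolding uniformizable_def
proof (intro exI[of _ ee] conjI)
  define E where "E l i j = (if i = j then Ec T q l else 0)" for l i j :: nat
  have sumE: "(\<Sum>j<2. E l i j * z j ^ (q ^ l)) = Ec T q l * z i ^ (q ^ l)" if "i < 2" for l i z
    using less_2_cases[OF that] by (auto simp: E_def numeral_2_eq_2 lessThan_Suc)
  show "is_exponential absC q 2 (asT T) ee"
    unfolding is_exponential_def
  proof (intro exI[of _ E] conjI ballI allI impI)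
    fix i j :: nat assume "i < 2" "j < 2"
    show "E 0 i j = (if i = j then 1 else 0)" by (simp add: E_def)
  next
    fix z :: "nat \<Rightarrow> 'c" assume "z \<in> cvec 2"
    show "ee z \<in> cvec 2" by (simp add: cvec_def ee_def)
  next
    fix z :: "nat \<Rightarrow> 'c" and i :: nat assume "z \<in> cvec 2" "i < 2"
    show "conv absC (\<lambda>n. \<Sum>l<n. \<Sum>j<2. E l i j * z j ^ (q ^ l)) (ee z i)"
      using conv_eC[of "z i"] \<open>i < 2\<close> by (simp add: sumE SS_def[abs_def] ee_def)
  next
    fix z :: "nat \<Rightarrow> 'c" assume "z \<in> cvec 2"
    have mv: "mat_vec 2 (asT T ! 0) z = (\<lambda>i. if i = 0 then T * z 0 + z 1 else if i = 1 then T * z 1 else 0)"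
      by (rule ext) (auto simp: mat_vec_def asT_def a0_def numeral_2_eq_2 lessThan_Suc)
    show "ee (mat_vec 2 (asT T ! 0) z) = tw (ee z)"
      unfolding mv tw_eq
      by (rule ext) (auto simp: ee_def eC_add eC_FE)
  qed
  show "ee ` cvec 2 = cvec 2"
  proof
    show "ee ` cvec 2 \<subseteq> cvec 2" by (auto simp: cvec_def ee_def)
  next
    show "cvec 2 \<subseteq> ee ` cvec 2"
    proof
      fix y :: "nat \<Rightarrow> 'c" assume y: "y \<in> cvec 2"
      define z where "z i = (if i < 2 then (SOME w. eC w = y i) else 0)" for i
      have "z \<in> cvec 2" by (simp add: z_def cvec_def)
      moreover have "ee z = y"
      proof
        fix i show "ee z i = y i"
          using someI_ex[OF GS[of "y i"]] y by (auto simp: ee_def z_def cvec_def)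
      qed
      ultimately show "y \<in> ee ` cvec 2" by blast
    qed
  qed
qed

definition XX :: "(nat \<Rightarrow> 'c) set" where "XX = {x \<in> cvec 2. x 0 = 0}"
definition ptv :: "'c \<Rightarrow> nat \<Rightarrow> 'c" where "ptv v = (\<lambda>i. if i = 1 then v else 0)"

lemma ptv_XX: "ptv v \<in> XX" by (simp add: ptv_def XX_def cvec_def)
lemma XX_ptv: "x \<in> XX \<Longrightarrow> x = ptv (x 1)"
proof (rule ext)
  fix i assume x: "x \<in> XX"
  show "x i = ptv (x 1) i"
  proof (cases "i \<ge> 2")
    case True thus ?thesis using x by (simp add: XX_def cvec_def ptv_def)
  next
    case False hence "i = 0 \<or> i = 1" by auto
    thus ?thesis using x by (auto simp: XX_def ptv_def)
  qed
qed

lemma infinite_UNIV_c: "infinite (UNIV :: 'c set)"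
proof
  assume "finite (UNIV :: 'c set)"
  hence "finite (range vs)" by (rule finite_subset[rotated]) simp
  hence "finite (UNIV :: nat set)" using vs_inj by (rule finite_imageD)
  thus False by simp
qed

lemma polyfun_line: "polyfun 2 f \<Longrightarrow> \<exists>Q. \<forall>v. f (ptv v) = poly Q v"
proof -
  assume "polyfun 2 f"
  then obtain S c where S: "finite S" "\<forall>x. f x = (\<Sum>\<alpha>\<in>S. c \<alpha> * (\<Prod>i<2. x i ^ \<alpha> i))"
    unfolding polyfun_def by blast
  define Q where "Q = (\<Sum>\<alpha>\<in>S. monom (c \<alpha> * 0 ^ (\<alpha> 0)) (\<alpha> 1))"
  have "f (ptv v) = poly Q v" for v
    by (simp add: S Q_def poly_sum poly_monom ptv_def numeral_2_eq_2 lessThan_Suc mult_ac)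
  thus ?thesis by blast
qed

lemma XX_closed: "zar_closed 2 XX"
proof -
  define \<alpha>0 where "\<alpha>0 = (\<lambda>i::nat. if i = 0 then 1 else (0::nat))"
  have "polyfun 2 (\<lambda>x::nat \<Rightarrow> 'c. x 0)"
    unfolding polyfun_def
    by (rule exI[of _ "{\<alpha>0}"], rule exI[of _ "\<lambda>_. 1"])
       (simp add: \<alpha>0_def numeral_2_eq_2 lessThan_Suc)
  moreover have "XX = {x \<in> cvec 2. \<forall>f\<in>{\<lambda>x::nat \<Rightarrow> 'c. x 0}. f x = 0}" by (simp add: XX_def)
  ultimately show ?thesis unfolding zar_closed_def by blast
qed

lemma XX_irred: "zar_irreducible 2 XX"
  unfolding zar_irreducible_def
proof (intro conjI allI impI)
  show "XX \<noteq> {}" using ptv_XX by blast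
next
  fix Z1 Z2 :: "(nat \<Rightarrow> 'c) set"
  assume c1: "zar_closed 2 Z1" and c2: "zar_closed 2 Z2" and cov: "XX \<subseteq> Z1 \<union> Z2"
  obtain P1 where P1: "\<forall>f\<in>P1. polyfun 2 f" "Z1 = {x \<in> cvec 2. \<forall>f\<in>P1. f x = 0}"
    using c1 unfolding zar_closed_def by blast
  obtain P2 where P2: "\<forall>f\<in>P2. polyfun 2 f" "Z2 = {x \<in> cvec 2. \<forall>f\<in>P2. f x = 0}"
    using c2 unfolding zar_closed_def by blast
  show "XX \<subseteq> Z1 \<or> XX \<subseteq> Z2"
  proof (rule ccontr)
    assume "\<not> (XX \<subseteq> Z1 \<or> XX \<subseteq> Z2)"
    then obtain x1 x2 where x1: "x1 \<in> XX" "x1 \<notin> Z1" and x2: "x2 \<in> XX" "x2 \<notin> Z2" by blast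
    obtain f1 where f1: "f1 \<in> P1" "f1 x1 \<noteq> 0" using x1 P1 by (auto simp: XX_def)
    obtain f2 where f2: "f2 \<in> P2" "f2 x2 \<noteq> 0" using x2 P2 by (auto simp: XX_def)
    obtain Q1 where Q1: "\<forall>v. f1 (ptv v) = poly Q1 v" using polyfun_line P1 f1 by blast
    obtain Q2 where Q2: "\<forall>v. f2 (ptv v) = poly Q2 v" using polyfun_line P2 f2 by blast
    have "Q1 \<noteq> 0" using f1 Q1 XX_ptv[OF x1(1)] by (metis poly_0)
    moreover have "Q2 \<noteq> 0" using f2 Q2 XX_ptv[OF x2(1)] by (metis poly_0)
    ultimately have "Q1 * Q2 \<noteq> 0" by simp
    hence fin: "finite {v. poly (Q1 * Q2) v = 0}" by (rule poly_roots_finite)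
    have "poly (Q1 * Q2) v = 0" for v
    proof -
      have "ptv v \<in> Z1 \<union> Z2" using cov ptv_XX by blast
      hence "f1 (ptv v) = 0 \<or> f2 (ptv v) = 0" using P1 P2 f1 f2 by auto
      thus ?thesis using Q1 Q2 by auto
    qed
    hence "{v. poly (Q1 * Q2) v = 0} = UNIV" by blast
    thus False using fin infinite_UNIV_c by simp
  qed
qed

lemma XX_ne: "XX \<noteq> cvec 2"
proof
  assume "XX = cvec 2"
  moreover have "(\<lambda>i. if i = 0 then (1::'c) else 0) \<in> cvec 2" by (simp add: cvec_def)
  ultimately have "(\<lambda>i. if i = 0 then (1::'c) else 0) \<in> XX" by simp
  thus False by (simp add: XX_def)
qed

lemma vs_torsion: "ptv (vs j) \<in> torsion q 2 (asT T)"
proof -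
  define N where "N = Suc (Suc j)"
  define A :: "'c poly" where "A = monom 1 N"
  have A0: "A \<noteq> 0" by (simp add: A_def)
  have Ac: "\<forall>k. coeff A k \<in> Fq q" by (simp add: A_def coeff_monom Fq_0 Fq_1)
  have dA: "degree A = N" by (simp add: A_def degree_monom_eq)
  have tz: "(tw ^^ N) (ptv (vs j)) i = 0" for i
  proof -
    consider "i = 0" | "i = 1" | "i \<ge> 2" by linarith
    thus ?thesis
    proof cases
      case 1 thus ?thesis using tw_pow[of N "ptv (vs j)"] Cpow_vs_kill[of j]
        by (simp add: N_def ptv_def del: funpow.simps)
    next
      case 2
      have "Cpow N (vs j) = CC (Cpow (Suc j) (vs j))" by (simp add: N_def)
      thus ?thesis using tw_pow[of N "ptv (vs j)"] Cpow_vs_kill[of j] 2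
        by (simp add: ptv_def del: funpow.simps)
    next
      case 3 thus ?thesis using tw_pow_hi[of i "Suc j"] by (simp add: N_def)
    qed
  qed
  have "Phi_poly 2 q (asT T) A (ptv (vs j)) = (\<lambda>_. 0)"
  proof
    fix i
    have "Phi_poly 2 q (asT T) A (ptv (vs j)) i = (\<Sum>k\<le>N. (if N = k then 1 else 0) * (tw ^^ k) (ptv (vs j)) i)"
      unfolding Phi_poly_def dA by (simp add: A_def coeff_monom del: funpow.simps)
    also have "\<dots> = (\<Sum>k\<le>N. if N = k then (tw ^^ k) (ptv (vs j)) i else 0)"
      by (intro sum.cong) auto
    also have "\<dots> = (tw ^^ N) (ptv (vs j)) i" by (subst sum.delta') auto
    finally show "Phi_poly 2 q (asT T) A (ptv (vs j)) i = 0" using tz by simp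
  qed
  moreover have "ptv (vs j) \<in> cvec 2" using ptv_XX by (simp add: XX_def)
  ultimately show ?thesis unfolding torsion_def using A0 Ac by blast
qed

lemma XX_inf: "infinite (XX \<inter> torsion q 2 (asT T))"
proof
  assume fin: "finite (XX \<inter> torsion q 2 (asT T))"
  have "range (ptv \<circ> vs) \<subseteq> XX \<inter> torsion q 2 (asT T)" using ptv_XX vs_torsion by auto
  hence "finite (range (ptv \<circ> vs))" using fin finite_subset by blast
  moreover have "inj (ptv \<circ> vs)"
  proof (rule injI)
    fix i j assume "(ptv \<circ> vs) i = (ptv \<circ> vs) j"
    hence "ptv (vs i) 1 = ptv (vs j) 1" by simp
    hence "vs i = vs j" by (simp add: ptv_def)
    thus "i = j" using vs_inj by (simp add: inj_eq)
  qed
  ultimately have "finite (UNIV :: nat set)" by (rule finite_imageD)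
  thus False by simp
qed

lemma no_tset: "torsion_set q 2 (asT T) Y \<Longrightarrow> \<not> Y \<subseteq> XX"
proof
  assume ts: "torsion_set q 2 (asT T) Y" and sub: "Y \<subseteq> XX"
  then obtain x B where x: "x \<in> torsion q 2 (asT T)" and B: "sub_Tmodule q 2 (asT T) B"
    and Bne: "B \<noteq> {(\<lambda>_. 0)}" and Y: "Y = translate x B"
    unfolding torsion_set_def by blast
  have B0: "(\<lambda>_. 0) \<in> B" and Btw: "tw ` B \<subseteq> B" and Bcl: "zar_closed 2 B"
    using B unfolding sub_Tmodule_def by auto
  have Bc: "B \<subseteq> cvec 2" using Bcl unfolding zar_closed_def by blast
  have tr: "(\<lambda>i. x i + b i) \<in> XX" if "b \<in> B" for b
    using sub that unfolding Y translate_def by blast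
  have x0: "x 0 = 0" using tr[OF B0] by (simp add: XX_def)
  have "b = (\<lambda>_. 0)" if b: "b \<in> B" for b
  proof -
    have b0: "b 0 = 0" using tr[OF b] x0 by (simp add: XX_def)
    have "tw b \<in> B" using Btw b by blast
    hence "tw b 0 = 0" using tr[of "tw b"] x0 by (simp add: XX_def)
    hence b1: "b 1 = 0" using b0 by (simp add: tw_eq)
    have "b \<in> cvec 2" using Bc b by blast
    show ?thesis
    proof (rule ext)
      fix i show "b i = 0"
      proof (cases "i \<ge> 2")
        case True thus ?thesis using \<open>b \<in> cvec 2\<close> by (simp add: cvec_def)
      next
        case False hence "i = 0 \<or> i = 1" by auto
        thus ?thesis using b0 b1 by auto
      qed
    qed
  qed
  hence "B = {(\<lambda>_. 0)}" using B0 by blast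
  thus False using Bne by simp
qed

lemma main: "\<exists>m as X. abelian_Tmodule q T m as \<and> uniformizable absC q m as \<and>
           subvariety m X \<and> X \<noteq> cvec m \<and>
           infinite (X \<inter> torsion q m as) \<and>
           (\<forall>Y. torsion_set q m as Y \<longrightarrow> \<not> Y \<subseteq> X)"
  using abel unif XX_closed XX_irred XX_ne XX_inf no_tset unfolding subvariety_def by blast

end

theorem proposition3:
  fixes absC :: "'c::field \<Rightarrow> real" and T :: 'c and p n q :: nat
  assumes "prime p" and "CHAR('c) = p" and "n \<ge> 1" and "q = p ^ n"
    and "C_model absC q T"
  shows "\<exists>m as X. abelian_Tmodule q T m as \<and> uniformizable absC q m as \<and>
           subvariety m X \<and> X \<noteq> cvec m \<and>
           infinite (X \<inter> torsion q m as) \<and>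
           (\<forall>Y. torsion_set q m as Y \<longrightarrow> \<not> Y \<subseteq> X)"
proof -
  interpret tset absC T p n q using assms by unfold_locales
  show ?thesis by (rule main)
qed


end
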